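(* Let $K$ be a field, $\vartheta$ any one of the four types (left, right, pre-two-sided, two-sided), and $\mathcal A$ a $K$-algebra. Then $\mathcal A$ is $\vartheta$-stable if and only if one of the following holds: (1) $\mathcal A=K$ (i.e., $\mathcal A=K\cdot 1$); (2) $K\simeq\mathbb Z/2\mathbb Z$ and $\mathcal A\simeq\mathbb Z/2\mathbb Z\times\mathbb Z/2\mathbb Z$ (product algebra).
   Context: Algebras are associative, unital and nonzero. A $\vartheta$-ideal is a left ideal if $\vartheta$ = left, a right ideal if $\vartheta$ = right, and a two-sided ideal if $\vartheta$ is pre-two-sided or two-sided. $\mathcal A$ is $\vartheta$-stable if every $K$-subspace $V$ of $\mathcal A$ with $1\notin V$ is a $\vartheta$-ideal of $\mathcal A$. *)

theory Defs
  imports Main "HOL.Vector_Spaces" "HOL-Library.Z2"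
begin

datatype ideal_type = Left | Right | PreTwoSided | TwoSided

text \<open>Nonzero-ness and unitality are built into the class ring_1.\<close>
definition is_algebra :: "('k::field \<Rightarrow> 'a::ring_1 \<Rightarrow> 'a) \<Rightarrow> bool" where
  "is_algebra scale \<longleftrightarrow> vector_space scale \<and>
     (\<forall>c x y. scale c (x * y) = scale c x * y \<and> scale c (x * y) = x * scale c y)"

definition left_ideal :: "'a::ring_1 set \<Rightarrow> bool" where
  "left_ideal V \<longleftrightarrow> 0 \<in> V \<and> (\<forall>x\<in>V. \<forall>y\<in>V. x + y \<in> V) \<and> (\<forall>x\<in>V. - x \<in> V)
     \<and> (\<forall>a. \<forall>x\<in>V. a * x \<in> V)"

definition right_ideal :: "'a::ring_1 set \<Rightarrow> bool" where
  "right_ideal V \<longleftrightarrow> 0 \<in> V \<and> (\<forall>x\<in>V. \<forall>y\<in>V. x + y \<in> V) \<and> (\<forall>x\<in>V. - x \<in> V)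
     \<and> (\<forall>a. \<forall>x\<in>V. x * a \<in> V)"

definition two_sided_ideal :: "'a::ring_1 set \<Rightarrow> bool" where
  "two_sided_ideal V \<longleftrightarrow> left_ideal V \<and> right_ideal V"

fun theta_ideal :: "ideal_type \<Rightarrow> 'a::ring_1 set \<Rightarrow> bool" where
  "theta_ideal Left V = left_ideal V"
| "theta_ideal Right V = right_ideal V"
| "theta_ideal PreTwoSided V = two_sided_ideal V"
| "theta_ideal TwoSided V = two_sided_ideal V"

definition theta_stable :: "ideal_type \<Rightarrow> ('k::field \<Rightarrow> 'a::ring_1 \<Rightarrow> 'a) \<Rightarrow> bool" where
  "theta_stable \<theta> scale \<longleftrightarrow>
     (\<forall>V. module.subspace scale V \<and> (1::'a) \<notin> V \<longrightarrow> theta_ideal \<theta> V)"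

definition field_iso_Z2 :: "('k::field \<Rightarrow> bit) \<Rightarrow> bool" where
  "field_iso_Z2 \<psi> \<longleftrightarrow> bij \<psi> \<and> (\<forall>x y. \<psi> (x + y) = \<psi> x + \<psi> y) \<and>
     (\<forall>x y. \<psi> (x * y) = \<psi> x * \<psi> y) \<and> \<psi> 1 = 1"

definition alg_iso_Z2xZ2 ::
  "('k::field \<Rightarrow> 'a::ring_1 \<Rightarrow> 'a) \<Rightarrow> ('k \<Rightarrow> bit) \<Rightarrow> ('a \<Rightarrow> bit \<times> bit) \<Rightarrow> bool" where
  "alg_iso_Z2xZ2 scale \<psi> \<phi> \<longleftrightarrow> bij \<phi> \<and>
     (\<forall>x y. \<phi> (x + y) = (fst (\<phi> x) + fst (\<phi> y), snd (\<phi> x) + snd (\<phi> y))) \<and>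
     (\<forall>x y. \<phi> (x * y) = (fst (\<phi> x) * fst (\<phi> y), snd (\<phi> x) * snd (\<phi> y))) \<and>
     \<phi> 1 = (1, 1) \<and>
     (\<forall>c x. \<phi> (scale c x) = (\<psi> c * fst (\<phi> x), \<psi> c * snd (\<phi> x)))"

end

theory Submission
  imports Defs
begin

lemma ideal_from_mult:
  assumes alg: "is_algebra s" and sub: "module.subspace s V"
    and mul: "\<And>a v. v \<in> V \<Longrightarrow> a * v \<in> V \<and> v * a \<in> V"
  shows "theta_ideal \<theta> V"
proof -
  interpret vector_space s using alg unfolding is_algebra_def by blast
  have "0 \<in> V" "\<forall>x\<in>V. \<forall>y\<in>V. x + y \<in> V" "\<forall>x\<in>V. - x \<in> V"
    using sub subspace_0 subspace_add subspace_neg by blast+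
  then show ?thesis using mul
    by (cases \<theta>) (auto simp: left_ideal_def right_ideal_def two_sided_ideal_def)
qed

lemma bwd1:
  assumes alg: "is_algebra s" and all: "\<forall>x::'a::ring_1. \<exists>c::'k::field. x = s c 1"
  shows "theta_stable \<theta> s"
  unfolding theta_stable_def
proof (intro allI impI)
  fix V assume A: "module.subspace s V \<and> (1::'a) \<notin> V"
  interpret vector_space s using alg unfolding is_algebra_def by blast
  have V0: "v = 0" if "v \<in> V" for v
  proof -
    obtain c where c: "v = s c 1" using all by blast
    show ?thesis
    proof (rule ccontr)
      assume "v \<noteq> 0"
      then have "c \<noteq> 0" using c by auto
      have "s (inverse c) v \<in> V" using A that subspace_scale by blast
      moreover have "s (inverse c) v = 1" using c \<open>c \<noteq> 0\<close> by simp
      ultimately show False using A by simp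
    qed
  qed
  have "0 \<in> V" using A subspace_0 by blast
  show "theta_ideal \<theta> V"
  proof (rule ideal_from_mult[OF alg])
    show "module.subspace s V" using A by blast
    fix a v assume "v \<in> V"
    then have "v = 0" by (rule V0)
    then show "a * v \<in> V \<and> v * a \<in> V" using \<open>0 \<in> V\<close> by simp
  qed
qed

lemma bwd2:
  fixes s :: "'k::field \<Rightarrow> 'a::ring_1 \<Rightarrow> 'a"
  assumes alg: "is_algebra s" and iso: "alg_iso_Z2xZ2 s \<psi> \<phi>"
  shows "theta_stable \<theta> s"
  unfolding theta_stable_def
proof (intro allI impI)
  fix V assume A: "module.subspace s V \<and> (1::'a) \<notin> V"
  interpret vector_space s using alg unfolding is_algebra_def by blast
  have inj: "inj \<phi>" and add: "\<And>x y. \<phi> (x + y) = (fst (\<phi> x) + fst (\<phi> y), snd (\<phi> x) + snd (\<phi> y))"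
    and mul: "\<And>x y. \<phi> (x * y) = (fst (\<phi> x) * fst (\<phi> y), snd (\<phi> x) * snd (\<phi> y))"
    and one: "\<phi> 1 = (1,1)"
    using iso unfolding alg_iso_Z2xZ2_def bij_def by auto
  have z: "\<phi> 0 = (0,0)" using add[of 0 0] by (cases "\<phi> 0") auto
  have key: "a * v \<in> {0, v} \<and> v * a \<in> {0, v}" if "v \<noteq> 1" for a v :: 'a
  proof -
    have nv: "\<phi> v \<noteq> (1,1)" using that one inj by (metis injD)
    obtain p q where pq: "\<phi> v = (p,q)" by fastforce
    obtain r t where rt: "\<phi> a = (r,t)" by fastforce
    have "(\<phi> (a*v) = \<phi> 0 \<or> \<phi> (a*v) = \<phi> v) \<and> (\<phi> (v*a) = \<phi> 0 \<or> \<phi> (v*a) = \<phi> v)"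
      using nv unfolding mul z pq rt
      by (cases p; cases q; cases r; cases t) auto
    then show ?thesis using inj by (auto dest: injD)
  qed
  have "0 \<in> V" using A subspace_0 by blast
  show "theta_ideal \<theta> V"
  proof (rule ideal_from_mult[OF alg])
    show "module.subspace s V" using A by blast
    fix a v assume "v \<in> V"
    then have "v \<noteq> 1" using A by auto
    then show "a * v \<in> V \<and> v * a \<in> V" using key[of v a] \<open>v \<in> V\<close> \<open>0 \<in> V\<close> by auto
  qed
qed



lemma fwd:
  fixes s :: "'k::field \<Rightarrow> 'a::ring_1 \<Rightarrow> 'a" and m :: "'a \<Rightarrow> 'a \<Rightarrow> 'a"
  assumes alg: "is_algebra s"
    and mcases: "m = (*) \<or> m = (\<lambda>a v. v * a)"
    and st: "\<And>V a v. module.subspace s V \<Longrightarrow> 1 \<notin> V \<Longrightarrow> v \<in> V \<Longrightarrow> m a v \<in> V"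
    and nk: "\<not> (\<forall>x::'a. \<exists>c::'k. x = s c 1)"
  shows "\<exists>\<psi> \<phi>. field_iso_Z2 \<psi> \<and> alg_iso_Z2xZ2 s \<psi> \<phi>"
proof -
  interpret vector_space s using alg unfolding is_algebra_def by blast
  have comp: "\<And>c x y. s c (x*y) = s c x * y" "\<And>c x y. s c (x*y) = x * s c y"
    using alg unfolding is_algebra_def by blast+
  have m_add: "\<And>a b c. m a (b + c) = m a b + m a c"
    using mcases by (auto simp: algebra_simps)
  have m_diff: "\<And>a b c. m a (b - c) = m a b - m a c"
    using mcases by (auto simp: algebra_simps)
  have m_scale: "\<And>a c v. m a (s c v) = s c (m a v)"
    using mcases comp by auto
  have m_one: "\<And>a. m a 1 = a" using mcases by auto
  have m_self: "\<And>v. m v v = v * v" using mcases by auto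
  obtain x where x: "\<And>c. x \<noteq> s c 1" using nk by blast
  have indep: "a = 0" if "s a x = s b 1" for a b
  proof (rule ccontr)
    assume "a \<noteq> 0"
    have "x = s (inverse a) (s a x)" using \<open>a \<noteq> 0\<close> by simp
    also have "\<dots> = s (inverse a * b) 1" using that by simp
    finally show False using x by blast
  qed
  have sc1: "c = 0" if "s c (1::'a) = 0" for c using that by simp
  have lineideal: "\<exists>k. m a u = s k u" if u: "\<And>c. u \<noteq> s c 1" for a u
  proof -
    have "1 \<notin> span {u}"
    proof
      assume "1 \<in> span {u}"
      then obtain c where c: "1 = s c u" unfolding span_singleton by blast
      then have "c \<noteq> 0" by (metis scale_zero_left zero_neq_one)
      have "s (inverse c) 1 = s (inverse c) (s c u)" using c by simp
      also have "\<dots> = u" using \<open>c \<noteq> 0\<close> by simp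
      finally have "u = s (inverse c) 1" by simp
      then show False using u by blast
    qed
    then have "m a u \<in> span {u}" using st[of "span {u}" u a] span_base[of u "{u}"] by auto
    then show ?thesis unfolding span_singleton by blast
  qed
  obtain l where l: "m x x = s l x" using lineideal[OF x] by blast
  have lm: "(l - \<mu>) * \<mu> = 0" for \<mu>
  proof -
    define u where "u = x - s \<mu> 1"
    have u: "u \<noteq> s c 1" for c
    proof
      assume "u = s c 1"
      then have "x = s (c + \<mu>) 1" unfolding u_def by (simp add: algebra_simps eq_diff_eq)
      then show False using x by blast
    qed
    obtain \<nu> where nu: "m x u = s \<nu> u" using lineideal[OF u] by blast
    have "m x u = s l x - s \<mu> x" unfolding u_def m_diff m_scale m_one l ..
    moreover have "s \<nu> u = s \<nu> x - s (\<nu> * \<mu>) 1" unfolding u_def by (simp add: algebra_simps)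
    ultimately have eq: "s l x - s \<mu> x = s \<nu> x - s (\<nu> * \<mu>) 1" using nu by simp
    then have "s (l - \<mu> - \<nu>) x = s (- (\<nu> * \<mu>)) 1"
      by (simp add: algebra_simps)
    then have "l - \<mu> - \<nu> = 0" by (rule indep)
    then have "\<nu> = l - \<mu>" by simp
    then have "s l x - s \<mu> x = s \<nu> x" by (simp add: scale_left_diff_distrib)
    with eq have "s \<nu> x = s \<nu> x - s (\<nu> * \<mu>) 1" by simp
    then have "s (\<nu> * \<mu>) (1::'a) = 0" by (metis cancel_comm_monoid_add_class.diff_cancel diff_diff_eq2 diff_zero)
    then have "\<nu> * \<mu> = 0" by (rule sc1)
    then show ?thesis using \<open>\<nu> = l - \<mu>\<close> by simp
  qed
  have l1: "l = 1" using lm[of 1] by simp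
  have K2: "\<mu> = 0 \<or> \<mu> = 1" for \<mu> :: 'k
    using lm[of \<mu>] l1 by auto
  have kk: "(1::'k) + 1 = 0"
    using K2[of "1+1"] by (metis add_cancel_right_right zero_neq_one)
  have vv: "v + v = 0" for v :: 'a
  proof -
    have "v + v = s (1+1) v" by (simp only: scale_left_distrib scale_one)
    then show ?thesis using kk by simp
  qed
  have sc: "s c v = 0 \<or> s c v = v" for c v using K2[of c] by auto
  have xx: "x * x = x" using l l1 m_self by simp
  define f where "f = 1 - x"
  have x0: "x \<noteq> 0" using x[of 0] by simp
  have x1: "x \<noteq> 1" using x[of 1] by simp
  have f0: "f \<noteq> 0" using x1 unfolding f_def by simp
  have f1: "f \<noteq> 1" using x0 unfolding f_def by simp
  have xf: "x \<noteq> f"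
  proof
    assume "x = f"
    then have "x + x = 1" unfolding f_def by (simp add: algebra_simps eq_diff_eq)
    then show False using vv by simp
  qed
  have fn: "f \<noteq> s c 1" for c using K2[of c] f0 f1 by auto
  have all4: "y = 0 \<or> y = 1 \<or> y = x \<or> y = f" for y
  proof -
    obtain k1 where k1: "m y x = s k1 x" using lineideal[OF x] by blast
    obtain k2 where k2: "m y f = s k2 f" using lineideal[OF fn] by blast
    have "y = m y (x + f)" unfolding f_def by (simp add: m_one)
    also have "\<dots> = s k1 x + s k2 f" unfolding m_add k1 k2 ..
    finally show ?thesis using K2[of k1] K2[of k2] unfolding f_def by auto
  qed
  have neg: "- v = v" for v :: 'a using vv[of v] by (rule minus_unique)
  have fe: "f = 1 + x" unfolding f_def using neg[of x] by (simp add: diff_conv_add_uminus)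
  have t1: "x + f = 1" "f + x = 1" unfolding f_def by simp_all
  have t2: "1 + x = f" "x + 1 = f" using fe by (simp_all add: add.commute)
  have t3: "1 + f = x" unfolding fe by (metis add.assoc add.left_neutral vv)
  have t4: "f + 1 = x" using t3 by (simp add: add.commute)
  have t5: "x * f = 0" "f * x = 0" unfolding f_def by (simp_all add: algebra_simps xx)
  have t6: "f * f = f" unfolding f_def by (simp add: algebra_simps xx)
  note tab = vv[of x] vv[of f] vv[of 1] t1 t2 t3 t4 xx t5 t6
  define \<psi> where "\<psi> = (\<lambda>c::'k. if c = 0 then (0::bit) else 1)"
  define \<phi> where "\<phi> = (\<lambda>y::'a. (if y = x \<or> y = 1 then (1::bit) else 0, if y = f \<or> y = 1 then (1::bit) else 0))"
  have dist: "(0::'a) \<noteq> 1" "x \<noteq> 0" "x \<noteq> 1" "f \<noteq> 0" "f \<noteq> 1" "x \<noteq> f"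
    "(1::'a) \<noteq> 0" "0 \<noteq> x" "1 \<noteq> x" "0 \<noteq> f" "1 \<noteq> f" "f \<noteq> x"
    using x0 x1 f0 f1 xf by auto
  have "field_iso_Z2 \<psi>"
    unfolding field_iso_Z2_def
  proof (intro conjI allI)
    show "bij \<psi>"
      unfolding bij_def inj_def surj_def \<psi>_def
    proof (intro conjI allI impI)
      fix a b :: 'k assume "(if a = 0 then 0::bit else 1) = (if b = 0 then 0 else 1)"
      then show "a = b" using K2[of a] K2[of b] by (auto split: if_splits)
    next
      fix y :: bit show "\<exists>c::'k. y = (if c = 0 then 0 else 1)"
        by (cases y) (rule exI[of _ "0::'k"], simp, rule exI[of _ "1::'k"], simp)
    qed
  next
    fix a b :: 'k
    show "\<psi> (a + b) = \<psi> a + \<psi> b" "\<psi> (a * b) = \<psi> a * \<psi> b"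
      unfolding \<psi>_def using K2[of a] K2[of b] kk by auto
  next
    show "\<psi> 1 = 1" unfolding \<psi>_def by simp
  qed
  moreover have "alg_iso_Z2xZ2 s \<psi> \<phi>"
    unfolding alg_iso_Z2xZ2_def
  proof (intro conjI allI)
    show "bij \<phi>"
      unfolding bij_def inj_def surj_def
    proof (intro conjI allI impI)
      fix a b :: 'a assume "\<phi> a = \<phi> b"
      then show "a = b" using all4[of a] all4[of b] dist unfolding \<phi>_def by auto
    next
      fix y :: "bit \<times> bit"
      obtain p q where y: "y = (p, q)" by fastforce
      have "\<phi> 0 = (0,0)" "\<phi> 1 = (1,1)" "\<phi> x = (1,0)" "\<phi> f = (0,1)"
        unfolding \<phi>_def using dist by simp_all
      then show "\<exists>a. y = \<phi> a" unfolding y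
        by (cases p; cases q) (metis)+
    qed
  next
    fix a b :: 'a
    show "\<phi> (a + b) = (fst (\<phi> a) + fst (\<phi> b), snd (\<phi> a) + snd (\<phi> b))"
      using all4[of a] all4[of b] dist tab unfolding \<phi>_def by auto
    show "\<phi> (a * b) = (fst (\<phi> a) * fst (\<phi> b), snd (\<phi> a) * snd (\<phi> b))"
      using all4[of a] all4[of b] dist tab unfolding \<phi>_def by auto
  next
    show "\<phi> 1 = (1,1)" unfolding \<phi>_def by simp
  next
    fix c :: 'k and a :: 'a
    show "\<phi> (s c a) = (\<psi> c * fst (\<phi> a), \<psi> c * snd (\<phi> a))"
      using K2[of c] all4[of a] dist unfolding \<phi>_def \<psi>_def by auto
  qed
  ultimately show ?thesis by blast
qed

theorem proposition7p13:
  fixes scale :: "'k::field \<Rightarrow> 'a::ring_1 \<Rightarrow> 'a" and \<theta> :: ideal_type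
  assumes "is_algebra scale"
  shows "theta_stable \<theta> scale \<longleftrightarrow>
           ((\<forall>x::'a. \<exists>c::'k. x = scale c 1) \<or>
            (\<exists>\<psi> \<phi>. field_iso_Z2 \<psi> \<and> alg_iso_Z2xZ2 scale \<psi> \<phi>))"
proof
  assume st: "theta_stable \<theta> scale"
  show "(\<forall>x::'a. \<exists>c::'k. x = scale c 1) \<or>
            (\<exists>\<psi> \<phi>. field_iso_Z2 \<psi> \<and> alg_iso_Z2xZ2 scale \<psi> \<phi>)"
  proof (cases "\<forall>x::'a. \<exists>c::'k. x = scale c 1")
    case True then show ?thesis by blast
  next
    case False
    define m :: "'a \<Rightarrow> 'a \<Rightarrow> 'a" where
      "m = (if \<theta> = Right then (\<lambda>a v. v * a) else (*))"
    have mc: "m = (*) \<or> m = (\<lambda>a v. v * a)" unfolding m_def by auto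
    have "m a v \<in> V" if "module.subspace scale V" "1 \<notin> V" "v \<in> V" for V a v
    proof -
      have "theta_ideal \<theta> V" using st that unfolding theta_stable_def by blast
      then show ?thesis using that(3) unfolding m_def
        by (cases \<theta>) (auto simp: left_ideal_def right_ideal_def two_sided_ideal_def)
    qed
    then show ?thesis using fwd[OF assms mc _ False] by blast
  qed
next
  assume "(\<forall>x::'a. \<exists>c::'k. x = scale c 1) \<or>
            (\<exists>\<psi> \<phi>. field_iso_Z2 \<psi> \<and> alg_iso_Z2xZ2 scale \<psi> \<phi>)"
  then show "theta_stable \<theta> scale" using bwd1[OF assms] bwd2[OF assms] by blast
qed

end
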